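(* Under the setting described in the context, each of the operators $F$, $F_h^+$ and $\hat F_h^+$ admits a distance-like additive eigenvector: there exist $\lambda\in\mathbb{R}$ and a distance-like $v\in\operatorname{Lip}_1(X)$ with $Fv=\lambda+v$; similarly for $F_h^+$ on $\operatorname{Lip}_1(X)$ and for $\hat F_h^+$ on $\operatorname{Lip}_1(X_h)$.
   Context: Let $C\subset\mathbb{R}^n$ be a pointed closed convex cone, $C^*$ its dual cone, $e^*\in\operatorname{int}C^*$, and $\Delta=\{x\in C:\langle x,e^*\rangle=1\}$. $x\le_C y$ means $y-x\in C$; the Funk hemi-metric on $\operatorname{Int}C$ is $\operatorname{Funk}(x,y)=\log\inf\{\lambda>0:x\le_C\lambda y\}$ and Hilbert's metric is $\operatorname{Hil}(x,y)=\operatorname{Funk}(x,y)+\operatorname{Funk}(y,x)$. Let $\mathcal{A},\mathcal{B}$ be nonempty compact action sets and $(T_{ab})_{(a,b)\in\mathcal{A}\times\mathcal{B}}$ self-maps of $\operatorname{Int}C$ that are nonexpansive for $\operatorname{Funk}$, such that for each $x$ the maps $a\mapsto T_{ab}(x)$, $b\mapsto T_{ab}(x)$ are continuous and for each compact $K$ the set $\{T_{ab}(x):(a,b,x)\in\mathcal{A}\times\mathcal{B}\times K\}$ is compact, and each $T_{ab}$ extends continuously to $C$. Small cone assumption: there is a closed cone $K\subset C$ with $T_{ab}(K)\subset K$ for all $a,b$ and $X:=K\cap\Delta\subset\operatorname{relint}\Delta$. For $h>0$, $X_h\subset X$ is a finite set with $X\subset\bigcup_{y\in X_h}\{x:\operatorname{Hil}(x,y)<h\}$.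 For $Y\subset\operatorname{Int}C$, $\operatorname{Lip}_1(Y)$ is the set of $f:Y\to\mathbb{R}$ with $f(x)-f(y)\le\operatorname{Funk}(x,y)$ on $Y$. Define $F:\operatorname{Lip}_1(X)\to\operatorname{Lip}_1(X)$ by $Fv(x)=\inf_{a\in\mathcal{A}}\sup_{b\in\mathcal{B}}\big[\log\langle T_{ab}(x),e^*\rangle+v\big(T_{ab}(x)/\langle T_{ab}(x),e^*\rangle\big)\big]$; $I_h^+:\mathbb{R}^{X_h}\to\mathbb{R}^X$, $I_h^+v(x)=\min_{y\in X_h}[v(y)+\operatorname{Funk}(x,y)]$; $R_h:\mathbb{R}^X\to\mathbb{R}^{X_h}$ the restriction; $F_h^+=FI_h^+R_h$ on $\operatorname{Lip}_1(X)$ and $\hat F_h^+=R_hFI_h^+$ on $\operatorname{Lip}_1(X_h)$. A function $v\in\operatorname{Lip}_1(Y)$ is distance-like if $v(x)\ge\alpha+\operatorname{Funk}(x,x_1)$ for all $x\in Y$, for some $x_1\in Y$, $\alpha\in\mathbb{R}$. *)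

theory Defs
  imports "HOL-Analysis.Analysis"
begin

definition dual_cone :: "'a::euclidean_space set \<Rightarrow> 'a set" where
  "dual_cone C = {y. \<forall>x\<in>C. 0 \<le> x \<bullet> y}"

definition cone_le :: "'a::euclidean_space set \<Rightarrow> 'a \<Rightarrow> 'a \<Rightarrow> bool" where
  "cone_le C x y \<longleftrightarrow> y - x \<in> C"

definition pointed_cone :: "'a::euclidean_space set \<Rightarrow> bool" where
  "pointed_cone C \<longleftrightarrow> (\<forall>x. x \<in> C \<and> - x \<in> C \<longrightarrow> x = 0)"

definition Funk :: "'a::euclidean_space set \<Rightarrow> 'a \<Rightarrow> 'a \<Rightarrow> real" where
  "Funk C x y = ln (Inf {l. 0 < l \<and> cone_le C x (l *\<^sub>R y)})"

definition Hil :: "'a::euclidean_space set \<Rightarrow> 'a \<Rightarrow> 'a \<Rightarrow> real" where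
  "Hil C x y = Funk C x y + Funk C y x"

definition Delta_set :: "'a::euclidean_space set \<Rightarrow> 'a \<Rightarrow> 'a set" where
  "Delta_set C e = {x \<in> C. x \<bullet> e = 1}"

definition Lip1 :: "'a::euclidean_space set \<Rightarrow> 'a set \<Rightarrow> ('a \<Rightarrow> real) set" where
  "Lip1 C Y = {f. \<forall>x\<in>Y. \<forall>y\<in>Y. f x - f y \<le> Funk C x y}"

definition distance_like :: "'a::euclidean_space set \<Rightarrow> 'a set \<Rightarrow> ('a \<Rightarrow> real) \<Rightarrow> bool" where
  "distance_like C Y v \<longleftrightarrow> (\<exists>x1\<in>Y. \<exists>\<alpha>::real. \<forall>x\<in>Y. \<alpha> + Funk C x x1 \<le> v x)"

definition Fop :: "'a::euclidean_space \<Rightarrow> 'b set \<Rightarrow> 'c set \<Rightarrow> ('b \<Rightarrow> 'c \<Rightarrow> 'a \<Rightarrow> 'a)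
    \<Rightarrow> ('a \<Rightarrow> real) \<Rightarrow> 'a \<Rightarrow> real" where
  "Fop e A B T v x = (INF a\<in>A. SUP b\<in>B.
      ln (T a b x \<bullet> e) + v ((1 / (T a b x \<bullet> e)) *\<^sub>R T a b x))"

text \<open>Interpolation I_h^+ : only the values of v on X_h are used (so I_h^+ o R_h = Ih).\<close>
definition Ih :: "'a::euclidean_space set \<Rightarrow> 'a set \<Rightarrow> ('a \<Rightarrow> real) \<Rightarrow> 'a \<Rightarrow> real" where
  "Ih C Xh v x = Min ((\<lambda>y. v y + Funk C x y) ` Xh)"

end

theory Submission
  imports Defs "HOL-Analysis.Analysis" "HOL-Complex_Analysis.Great_Picard"
begin

definition bdX :: "'a set \<Rightarrow> ('a \<Rightarrow> real) \<Rightarrow> real \<Rightarrow> bool" where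
  "bdX X v B \<longleftrightarrow> (\<forall>x\<in>X. \<bar>v x\<bar> \<le> B)"

definition lipD :: "'a set \<Rightarrow> ('a \<Rightarrow> 'a \<Rightarrow> real) \<Rightarrow> ('a \<Rightarrow> real) \<Rightarrow> bool" where
  "lipD X D v \<longleftrightarrow> (\<forall>x\<in>X. \<forall>y\<in>X. v x - v y \<le> D x y)"

lemma infsup_mono:
  fixes f g :: "'b \<Rightarrow> 'c \<Rightarrow> real"
  assumes "A \<noteq> {}" "B \<noteq> {}"
    and bf: "\<And>a b. a \<in> A \<Longrightarrow> b \<in> B \<Longrightarrow> \<bar>f a b\<bar> \<le> M"
    and bg: "\<And>a b. a \<in> A \<Longrightarrow> b \<in> B \<Longrightarrow> \<bar>g a b\<bar> \<le> M"
    and le: "\<And>a b. a \<in> A \<Longrightarrow> b \<in> B \<Longrightarrow> f a b \<le> g a b + d"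
  shows "(INF a\<in>A. SUP b\<in>B. f a b) \<le> (INF a\<in>A. SUP b\<in>B. g a b) + d"
proof -
  have bdaf: "bdd_above (f a ` B)" if "a \<in> A" for a
    using bf[OF that] by (intro bdd_aboveI[of _ M]) (auto simp: abs_le_iff)
  have bdag: "bdd_above (g a ` B)" if "a \<in> A" for a
    using bg[OF that] by (intro bdd_aboveI[of _ M]) (auto simp: abs_le_iff)
  have s1: "(SUP b\<in>B. f a b) \<le> (SUP b\<in>B. g a b) + d" if a: "a \<in> A" for a
  proof (rule cSUP_least[OF \<open>B \<noteq> {}\<close>])
    fix b assume b: "b \<in> B"
    have "f a b \<le> g a b + d" using le[OF a b] .
    also have "g a b \<le> (SUP b\<in>B. g a b)" by (rule cSUP_upper[OF b bdag[OF a]])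
    finally show "f a b \<le> (SUP b\<in>B. g a b) + d" by simp
  qed
  have lowf: "- M \<le> (SUP b\<in>B. f a b)" if a: "a \<in> A" for a
  proof -
    obtain b where b: "b \<in> B" using \<open>B \<noteq> {}\<close> by auto
    have "- M \<le> f a b" using bf[OF a b] by (simp add: abs_le_iff)
    also have "\<dots> \<le> (SUP b\<in>B. f a b)" by (rule cSUP_upper[OF b bdaf[OF a]])
    finally show ?thesis .
  qed
  have bdb: "bdd_below ((\<lambda>a. SUP b\<in>B. f a b) ` A)"
    using lowf by (intro bdd_belowI[of _ "-M"]) auto
  have "(INF a\<in>A. SUP b\<in>B. f a b) - d \<le> (INF a\<in>A. SUP b\<in>B. g a b)"
  proof (rule cINF_greatest[OF \<open>A \<noteq> {}\<close>])
    fix a assume a: "a \<in> A"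
    have "(INF a\<in>A. SUP b\<in>B. f a b) \<le> (SUP b\<in>B. f a b)" by (rule cINF_lower[OF bdb a])
    then show "(INF a\<in>A. SUP b\<in>B. f a b) - d \<le> (SUP b\<in>B. g a b)" using s1[OF a] by simp
  qed
  then show ?thesis by simp
qed

lemma infsup_bound:
  fixes f :: "'b \<Rightarrow> 'c \<Rightarrow> real"
  assumes "A \<noteq> {}" "B \<noteq> {}"
    and bf: "\<And>a b. a \<in> A \<Longrightarrow> b \<in> B \<Longrightarrow> \<bar>f a b\<bar> \<le> M"
  shows "\<bar>(INF a\<in>A. SUP b\<in>B. f a b)\<bar> \<le> M"
proof -
  have M0: "0 \<le> M" using assms by fastforce
  have c: "(INF a\<in>A. SUP b\<in>B. (0::real)) = 0" using assms by simp
  have fl: "0 \<le> f a b + M" if "a \<in> A" "b \<in> B" for a b using bf[OF that] by (simp add: abs_le_iff)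
  have "(INF a\<in>A. SUP b\<in>B. f a b) \<le> (INF a\<in>A. SUP b\<in>B. (\<lambda>a b. 0::real) a b) + M"
    by (rule infsup_mono[OF assms(1,2) bf]) (use bf M0 in \<open>auto simp: abs_le_iff\<close>)
  moreover have "(INF a\<in>A. SUP b\<in>B. (\<lambda>a b. 0::real) a b) \<le> (INF a\<in>A. SUP b\<in>B. f a b) + M"
    by (rule infsup_mono[OF assms(1,2) _ bf]) (use fl M0 in \<open>auto simp: abs_le_iff\<close>)
  ultimately show ?thesis using c by (simp add: abs_le_iff)
qed

locale absG =
  fixes X :: "'a::euclidean_space set" and D :: "'a \<Rightarrow> 'a \<Rightarrow> real"
    and G :: "('a \<Rightarrow> real) \<Rightarrow> 'a \<Rightarrow> real" and M M0 :: real
  assumes cX: "compact X" and neX: "X \<noteq> {}"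
    and D0: "\<And>x y. x \<in> X \<Longrightarrow> y \<in> X \<Longrightarrow> 0 \<le> D x y"
    and DM: "\<And>x y. x \<in> X \<Longrightarrow> y \<in> X \<Longrightarrow> D x y \<le> M"
    and Dcont: "\<And>x e. x \<in> X \<Longrightarrow> 0 < e \<Longrightarrow> \<exists>d>0. \<forall>y\<in>X. norm (x - y) < d \<longrightarrow> D x y < e \<and> D y x < e"
    and G0: "\<And>x. x \<in> X \<Longrightarrow> \<bar>G (\<lambda>_. 0) x\<bar> \<le> M0"
    and Gmono: "\<And>v w B1 B2 d x. bdX X v B1 \<Longrightarrow> bdX X w B2 \<Longrightarrow> (\<forall>y\<in>X. v y \<le> w y + d) \<Longrightarrow> x \<in> X
        \<Longrightarrow> G v x \<le> G w x + d"
    and Glip: "\<And>v B. bdX X v B \<Longrightarrow> lipD X D v \<Longrightarrow> lipD X D (G v)"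
begin

lemma M0_nonneg: "0 \<le> M0"
  using G0 neX by force

lemma M_nonneg: "0 \<le> M"
  using D0 DM neX by (meson all_not_in_conv order_trans)

lemma Gnexp:
  assumes "bdX X v B1" "bdX X w B2" "\<forall>y\<in>X. \<bar>v y - w y\<bar> \<le> d" "x \<in> X"
  shows "\<bar>G v x - G w x\<bar> \<le> d"
proof -
  have "G v x \<le> G w x + d"
    using assms by (intro Gmono[of v B1 w B2]) (auto simp: abs_le_iff)
  moreover have "G w x \<le> G v x + d"
    using assms by (intro Gmono[of w B2 v B1]) (auto simp: abs_le_iff)
  ultimately show ?thesis by (simp add: abs_le_iff)
qed

lemma bdX_zero: "bdX X (\<lambda>_. 0) 0"
  by (simp add: bdX_def)

lemma Gbd:
  assumes "bdX X v B" shows "bdX X (G v) (M0 + B)"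
  unfolding bdX_def
proof
  fix x assume x: "x \<in> X"
  have "\<bar>G v x - G (\<lambda>_. 0) x\<bar> \<le> B"
    using assms x by (intro Gnexp[OF assms bdX_zero]) (auto simp: bdX_def)
  then show "\<bar>G v x\<bar> \<le> M0 + B" using G0[OF x] by linarith
qed

lemma Gshift:
  assumes "bdX X v B" "x \<in> X"
  shows "G (\<lambda>y. v y + c) x = G v x + c"
proof -
  have b2: "bdX X (\<lambda>y. v y + c) (B + \<bar>c\<bar>)" using assms by (auto simp: bdX_def)
  have "G (\<lambda>y. v y + c) x \<le> G v x + c"
    by (rule Gmono[OF b2 assms(1)]) (use assms in auto)
  moreover have "G v x \<le> G (\<lambda>y. v y + c) x + (- c)"
    by (rule Gmono[OF assms(1) b2]) (use assms in auto)
  ultimately show ?thesis by linarith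
qed

lemma discounted:
  assumes a0: "0 < \<alpha>" and a1: "\<alpha> < 1"
  shows "\<exists>v. bdX X v (M0 / (1 - \<alpha>)) \<and> lipD X D v \<and> (\<forall>x\<in>X. G (\<lambda>y. \<alpha> * v y) x = v x)"
proof -
  define P where "P v = G (\<lambda>y. \<alpha> * v y)" for v
  define u where "u n = (P ^^ n) (\<lambda>_. 0)" for n
  have us: "u (Suc n) = P (u n)" for n by (simp add: u_def)
  have u0: "u 0 = (\<lambda>_. 0)" by (simp add: u_def)
  have M0n: "0 \<le> M0" by (rule M0_nonneg)
  have Q: "0 \<le> M0 / (1 - \<alpha>)" using M0n a1 by simp
  have bdscale: "bdX X (\<lambda>y. \<alpha> * f y) (\<alpha> * B)" if "bdX X f B" for f B
    using that a0 by (auto simp: bdX_def abs_mult intro: mult_left_mono)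
  have ubd: "bdX X (u n) (M0 / (1 - \<alpha>))" for n
  proof (induction n)
    case 0 then show ?case using Q by (simp add: u0 bdX_def)
  next
    case (Suc n)
    have "bdX X (P (u n)) (M0 + \<alpha> * (M0 / (1 - \<alpha>)))"
      unfolding P_def by (rule Gbd[OF bdscale[OF Suc]])
    moreover have "M0 + \<alpha> * (M0 / (1 - \<alpha>)) = M0 / (1 - \<alpha>)"
      using a1 by (simp add: field_simps)
    ultimately show ?case by (simp add: us)
  qed
  have lipscale: "lipD X D (\<lambda>y. \<alpha> * f y)" if "lipD X D f" for f
    unfolding lipD_def
  proof (intro ballI)
    fix x y assume xy: "x \<in> X" "y \<in> X"
    have h: "f x - f y \<le> D x y" using that xy by (auto simp: lipD_def)
    have "\<alpha> * (f x - f y) \<le> D x y"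
    proof (cases "f x - f y \<ge> 0")
      case True
      then have "\<alpha> * (f x - f y) \<le> 1 * (f x - f y)" using a1 by (intro mult_right_mono) auto
      then show ?thesis using h by simp
    next
      case False
      then have "\<alpha> * (f x - f y) \<le> 0" using a0 by (simp add: mult_nonneg_nonpos)
      then show ?thesis using D0[OF xy] by simp
    qed
    then show "\<alpha> * f x - \<alpha> * f y \<le> D x y" by (simp add: algebra_simps)
  qed
  have ulip: "lipD X D (u n)" for n
  proof (induction n)
    case 0 then show ?case using D0 by (simp add: u0 lipD_def)
  next
    case (Suc n)
    show ?case unfolding us P_def
      by (rule Glip[OF bdscale[OF ubd[of n]] lipscale[OF Suc]])
  qed
  have ustep: "\<forall>x\<in>X. \<bar>u (Suc n) x - u n x\<bar> \<le> \<alpha> ^ n * M0" for n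
  proof (induction n)
    case 0
    show ?case using G0 by (simp add: us u0 P_def)
  next
    case (Suc n)
    show ?case
    proof
      fix x assume x: "x \<in> X"
      have "\<forall>y\<in>X. \<bar>\<alpha> * u (Suc n) y - \<alpha> * u n y\<bar> \<le> \<alpha> * (\<alpha> ^ n * M0)"
      proof
        fix y assume y: "y \<in> X"
        have "\<bar>\<alpha> * u (Suc n) y - \<alpha> * u n y\<bar> = \<alpha> * \<bar>u (Suc n) y - u n y\<bar>"
          using a0 by (simp add: abs_mult right_diff_distrib[symmetric])
        also have "\<dots> \<le> \<alpha> * (\<alpha> ^ n * M0)" using Suc y a0 by (intro mult_left_mono) auto
        finally show "\<bar>\<alpha> * u (Suc n) y - \<alpha> * u n y\<bar> \<le> \<alpha> * (\<alpha> ^ n * M0)" .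
      qed
      then have "\<bar>P (u (Suc n)) x - P (u n) x\<bar> \<le> \<alpha> * (\<alpha> ^ n * M0)"
        unfolding P_def by (intro Gnexp[OF bdscale[OF ubd] bdscale[OF ubd] _ x])
      then show "\<bar>u (Suc (Suc n)) x - u (Suc n) x\<bar> \<le> \<alpha> ^ Suc n * M0"
        by (simp add: us)
    qed
  qed
  have ucau: "\<forall>x\<in>X. \<bar>u (n + k) x - u n x\<bar> \<le> M0 * (\<alpha> ^ n - \<alpha> ^ (n + k)) / (1 - \<alpha>)" for n k
  proof (induction k)
    case 0 then show ?case by simp
  next
    case (Suc k)
    show ?case
    proof
      fix x assume x: "x \<in> X"
      have "\<bar>u (n + Suc k) x - u n x\<bar> \<le> \<bar>u (Suc (n + k)) x - u (n + k) x\<bar> + \<bar>u (n + k) x - u n x\<bar>"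
        by simp
      also have "\<dots> \<le> \<alpha> ^ (n + k) * M0 + M0 * (\<alpha> ^ n - \<alpha> ^ (n + k)) / (1 - \<alpha>)"
        using ustep[of "n + k"] Suc x by (intro add_mono) auto
      also have "\<dots> = M0 * (\<alpha> ^ n - \<alpha> ^ (n + Suc k)) / (1 - \<alpha>)"
        using a1 by (simp add: field_simps)
      finally show "\<bar>u (n + Suc k) x - u n x\<bar> \<le> M0 * (\<alpha> ^ n - \<alpha> ^ (n + Suc k)) / (1 - \<alpha>)" .
    qed
  qed
  have ucau2: "\<bar>u m x - u n x\<bar> \<le> M0 * \<alpha> ^ n / (1 - \<alpha>)" if "x \<in> X" "n \<le> m" for x n m
  proof -
    obtain k where m: "m = n + k" using \<open>n \<le> m\<close> le_Suc_ex by blast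
    have "\<bar>u m x - u n x\<bar> \<le> M0 * (\<alpha> ^ n - \<alpha> ^ (n + k)) / (1 - \<alpha>)" using ucau that m by auto
    also have "\<dots> \<le> M0 * \<alpha> ^ n / (1 - \<alpha>)"
      using a0 a1 M0n by (intro divide_right_mono mult_left_mono) auto
    finally show ?thesis .
  qed
  have lim0: "(\<lambda>n. M0 * \<alpha> ^ n / (1 - \<alpha>)) \<longlonglongrightarrow> 0"
    using a0 a1 by (intro tendsto_eq_intros LIMSEQ_power_zero) auto
  have cau: "Cauchy (\<lambda>n. u n x)" if x: "x \<in> X" for x
  proof (rule CauchyI)
    fix e :: real assume e: "0 < e"
    obtain N where N: "\<And>n. n \<ge> N \<Longrightarrow> M0 * \<alpha> ^ n / (1 - \<alpha>) < e"
      using order_tendstoD(2)[OF lim0 e] by (auto simp: eventually_sequentially)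
    have mon: "M0 * \<alpha> ^ n / (1 - \<alpha>) \<le> M0 * \<alpha> ^ N / (1 - \<alpha>)" if "N \<le> n" for n
      using a0 a1 M0n that by (intro divide_right_mono mult_left_mono power_decreasing) auto
    show "\<exists>M. \<forall>m\<ge>M. \<forall>n\<ge>M. norm (u m x - u n x) < e"
    proof (intro exI allI impI)
      fix m n assume mn: "N \<le> m" "N \<le> n"
      show "norm (u m x - u n x) < e"
      proof (cases "n \<le> m")
        case True
        then show ?thesis using ucau2[OF x True] mon[OF mn(2)] N[of N] by simp
      next
        case False
        then have mn2: "m \<le> n" by simp
        show ?thesis using ucau2[OF x mn2] mon[OF mn(1)] N[of N] by (simp add: abs_minus_commute)
      qed
    qed
  qed
  define v where "v x = lim (\<lambda>n. u n x)" for x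
  have conv: "(\<lambda>n. u n x) \<longlonglongrightarrow> v x" if "x \<in> X" for x
    using cau[OF that] unfolding v_def by (simp add: Cauchy_convergent_iff convergent_LIMSEQ_iff)
  have vclose: "\<bar>v x - u n x\<bar> \<le> M0 * \<alpha> ^ n / (1 - \<alpha>)" if x: "x \<in> X" for x n
  proof (rule Lim_bounded[of "\<lambda>m. \<bar>u m x - u n x\<bar>" _ n])
    show "(\<lambda>m. \<bar>u m x - u n x\<bar>) \<longlonglongrightarrow> \<bar>v x - u n x\<bar>"
      by (intro tendsto_intros conv[OF x])
    show "\<forall>m\<ge>n. \<bar>u m x - u n x\<bar> \<le> M0 * \<alpha> ^ n / (1 - \<alpha>)" using ucau2[OF x] by auto
  qed
  have vbd: "bdX X v (M0 / (1 - \<alpha>))"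
    unfolding bdX_def
  proof
    fix x assume x: "x \<in> X"
    show "\<bar>v x\<bar> \<le> M0 / (1 - \<alpha>)"
      by (rule Lim_bounded[of "\<lambda>m. \<bar>u m x\<bar>" _ 0]) (use ubd x in \<open>auto simp: bdX_def intro: tendsto_intros conv\<close>)
  qed
  have vlip: "lipD X D v"
    unfolding lipD_def
  proof (intro ballI)
    fix x y assume x: "x \<in> X" and y: "y \<in> X"
    show "v x - v y \<le> D x y"
      by (rule Lim_bounded[of "\<lambda>m. u m x - u m y" _ 0])
        (use ulip x y in \<open>auto simp: lipD_def intro: tendsto_intros conv\<close>)
  qed
  have fixp: "P v x = v x" if x: "x \<in> X" for x
  proof -
    have "\<bar>P v x - v x\<bar> \<le> 2 * M0 * \<alpha> ^ Suc n / (1 - \<alpha>)" for n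
    proof -
      have "\<forall>y\<in>X. \<bar>\<alpha> * v y - \<alpha> * u n y\<bar> \<le> \<alpha> * (M0 * \<alpha> ^ n / (1 - \<alpha>))"
      proof
        fix y assume y: "y \<in> X"
        have "\<bar>\<alpha> * v y - \<alpha> * u n y\<bar> = \<alpha> * \<bar>v y - u n y\<bar>"
          using a0 by (simp add: abs_mult right_diff_distrib[symmetric])
        also have "\<dots> \<le> \<alpha> * (M0 * \<alpha> ^ n / (1 - \<alpha>))" using vclose[OF y] a0 by (intro mult_left_mono) auto
        finally show "\<bar>\<alpha> * v y - \<alpha> * u n y\<bar> \<le> \<alpha> * (M0 * \<alpha> ^ n / (1 - \<alpha>))" .
      qed
      then have h1: "\<bar>P v x - P (u n) x\<bar> \<le> \<alpha> * (M0 * \<alpha> ^ n / (1 - \<alpha>))"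
        unfolding P_def by (intro Gnexp[OF bdscale[OF vbd] bdscale[OF ubd] _ x])
      have h2: "\<bar>v x - u (Suc n) x\<bar> \<le> M0 * \<alpha> ^ Suc n / (1 - \<alpha>)" by (rule vclose[OF x])
      have "\<alpha> * (M0 * \<alpha> ^ n / (1 - \<alpha>)) = M0 * \<alpha> ^ Suc n / (1 - \<alpha>)" by simp
      then show ?thesis using h1 h2 unfolding us by linarith
    qed
    moreover have "(\<lambda>n. 2 * M0 * \<alpha> ^ Suc n / (1 - \<alpha>)) \<longlonglongrightarrow> 0"
      using a0 a1 by (intro tendsto_eq_intros LIMSEQ_power_zero LIMSEQ_Suc) auto
    ultimately have "\<bar>P v x - v x\<bar> \<le> 0"
      by (intro LIMSEQ_le_const[of "\<lambda>n. 2 * M0 * \<alpha> ^ Suc n / (1 - \<alpha>)"]) auto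
    then show ?thesis by simp
  qed
  show ?thesis using vbd vlip fixp unfolding P_def by blast
qed


theorem eigen:
  "\<exists>lam v. (\<exists>B. bdX X v B) \<and> lipD X D v \<and> (\<forall>x\<in>X. G v x = lam + v x)"
proof -
  define al where "al n = 1 - 1 / (real n + 2)" for n :: nat
  have al0: "0 < al n" for n by (simp add: al_def field_simps)
  have al1: "al n < 1" for n by (simp add: al_def)
  have oal: "1 - al n = 1 / (real n + 2)" for n by (simp add: al_def)
  have "\<forall>n. \<exists>v. bdX X v (M0 / (1 - al n)) \<and> lipD X D v \<and> (\<forall>x\<in>X. G (\<lambda>y. al n * v y) x = v x)"
    using discounted[OF al0 al1] by blast
  then obtain V where Vb: "\<And>n. bdX X (V n) (M0 / (1 - al n))"
    and Vl: "\<And>n. lipD X D (V n)" and Vf: "\<And>n x. x \<in> X \<Longrightarrow> G (\<lambda>y. al n * V n y) x = V n x"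
    by metis
  obtain x0 where x0: "x0 \<in> X" using neX by auto
  define c where "c n = (1 - al n) * V n x0" for n
  define w where "w n x = V n x - V n x0" for n x
  define z where "z n x = w n x + c n" for n x
  have M0n: "0 \<le> M0" by (rule M0_nonneg)
  have Mn: "0 \<le> M" by (rule M_nonneg)
  have wb: "\<bar>w n x\<bar> \<le> M" if x: "x \<in> X" for n x
  proof -
    have "V n x - V n x0 \<le> D x x0" "V n x0 - V n x \<le> D x0 x"
      using Vl[of n] x x0 by (auto simp: lipD_def)
    then show ?thesis using DM[OF x x0] DM[OF x0 x] by (simp add: w_def abs_le_iff)
  qed
  have cb: "\<bar>c n\<bar> \<le> M0" for n
  proof -
    have "\<bar>V n x0\<bar> \<le> M0 / (1 - al n)" using Vb[of n] x0 by (auto simp: bdX_def)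
    then have "(1 - al n) * \<bar>V n x0\<bar> \<le> M0" using al1[of n] by (simp add: field_simps)
    then show ?thesis using al1[of n] by (simp add: c_def abs_mult)
  qed
  have zb: "norm (z n x) \<le> M + M0" if "x \<in> X" for n x
    using wb[OF that, of n] cb[of n] by (simp add: z_def)
  have bdsc: "bdX X (\<lambda>y. al n * V n y) (M0 / (1 - al n))" for n
  proof -
    have "\<bar>al n * V n y\<bar> \<le> M0 / (1 - al n)" if "y \<in> X" for y
    proof -
      have "\<bar>al n * V n y\<bar> = al n * \<bar>V n y\<bar>" using al0[of n] by (simp add: abs_mult)
      also have "\<dots> \<le> 1 * \<bar>V n y\<bar>" using al1[of n] by (intro mult_right_mono) auto
      also have "\<dots> \<le> M0 / (1 - al n)" using Vb[of n] that by (auto simp: bdX_def)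
      finally show ?thesis .
    qed
    then show ?thesis by (simp add: bdX_def)
  qed
  have zeq: "G (\<lambda>y. al n * w n y) x = z n x" if x: "x \<in> X" for n x
  proof -
    have e1: "(\<lambda>y. al n * w n y) = (\<lambda>y. al n * V n y + (- (al n * V n x0)))"
      by (simp add: w_def algebra_simps)
    have "G (\<lambda>y. al n * w n y) x = G (\<lambda>y. al n * V n y) x + (- (al n * V n x0))"
      unfolding e1 by (rule Gshift[OF bdsc x])
    also have "\<dots> = z n x" using Vf[OF x] by (simp add: z_def w_def c_def algebra_simps)
    finally show ?thesis .
  qed
  have equi: "\<exists>d. 0 < d \<and> (\<forall>n y. y \<in> X \<and> norm (x - y) < d \<longrightarrow> norm (z n x - z n y) < e)"
    if x: "x \<in> X" and e: "0 < e" for x e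
  proof -
    obtain d where d: "d > 0" "\<forall>y\<in>X. norm (x - y) < d \<longrightarrow> D x y < e \<and> D y x < e"
      using Dcont[OF x e] by blast
    show ?thesis
    proof (intro exI conjI allI impI)
      fix n y assume y: "y \<in> X \<and> norm (x - y) < d"
      have "V n x - V n y \<le> D x y" "V n y - V n x \<le> D y x"
        using Vl[of n] x y by (auto simp: lipD_def)
      then show "norm (z n x - z n y) < e" using d y by (auto simp: z_def w_def abs_less_iff)
    qed (use d in auto)
  qed
  obtain g k where gc: "continuous_on X g" and k: "strict_mono (k :: nat \<Rightarrow> nat)"
    and gconv: "\<And>e. 0 < e \<Longrightarrow> \<exists>N. \<forall>n x. n \<ge> N \<and> x \<in> X \<longrightarrow> norm (z (k n) x - g x) < e"
    using Arzela_Ascoli[OF cX zb equi] by blast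
  define lam where "lam = g x0"
  define W where "W x = g x - lam" for x
  have cz: "c n = z n x0" for n by (simp add: z_def w_def)
  have Wclose: "\<bar>w (k n) y - W y\<bar> < 2 * e" if "y \<in> X" "0 < e" "\<forall>n x. n \<ge> N \<and> x \<in> X \<longrightarrow> norm (z (k n) x - g x) < e" "n \<ge> N"
    for y e N n
  proof -
    have "\<bar>z (k n) y - g y\<bar> < e" "\<bar>z (k n) x0 - g x0\<bar> < e" using that x0 by auto
    moreover have "w (k n) x0 = 0" by (simp add: w_def)
    ultimately show ?thesis by (simp add: W_def lam_def z_def abs_less_iff)
  qed
  have Wlip: "lipD X D W"
    unfolding lipD_def
  proof (intro ballI)
    fix x y assume x: "x \<in> X" and y: "y \<in> X"
    show "W x - W y \<le> D x y"
    proof (rule field_le_epsilon)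
      fix e :: real assume e: "0 < e"
      obtain N where N: "\<forall>n x. n \<ge> N \<and> x \<in> X \<longrightarrow> norm (z (k n) x - g x) < e / 2" using gconv[of "e/2"] e by auto
      have "\<bar>z (k N) x - g x\<bar> < e / 2" "\<bar>z (k N) y - g y\<bar> < e / 2" using N x y by auto
      moreover have "V (k N) x - V (k N) y \<le> D x y" using Vl x y by (auto simp: lipD_def)
      ultimately show "W x - W y \<le> D x y + e" unfolding W_def z_def w_def abs_less_iff by linarith
    qed
  qed
  have Wbd: "bdX X W (2 * (M + M0 + 1))"
  proof -
    obtain N where N: "\<forall>n x. n \<ge> N \<and> x \<in> X \<longrightarrow> norm (z (k n) x - g x) < 1" using gconv[of 1] by auto
    have gb: "\<bar>g x\<bar> \<le> M + M0 + 1" if "x \<in> X" for x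
      using N zb[OF that, of "k N"] that by force
    show ?thesis using gb gb[OF x0] by (force simp: bdX_def W_def lam_def)
  qed
  have "G W x = lam + W x" if x: "x \<in> X" for x
  proof -
    have small: "\<bar>G W x - g x\<bar> \<le> e" if e: "0 < e" for e
    proof -
      obtain N1 where N1: "\<forall>n x. n \<ge> N1 \<and> x \<in> X \<longrightarrow> norm (z (k n) x - g x) < e / 4"
        using gconv[of "e/4"] e by auto
      obtain N2 :: nat where N2: "M / (e / 4) < real N2" using reals_Archimedean2 by blast
      define n where "n = max N1 N2"
      define m where "m = k n"
      have nm: "n \<le> m" unfolding m_def using k by (simp add: seq_suble)
      have "M / (real m + 2) \<le> M / (real N2 + 2)"
        using nm Mn by (intro divide_left_mono) (auto simp: n_def)
      also have "\<dots> < e / 4"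
        using N2 e Mn by (simp add: field_simps)
      finally have Msmall: "M / (real m + 2) < e / 4" .
      have "\<forall>y\<in>X. \<bar>W y - al m * w m y\<bar> \<le> 3 * (e / 4)"
      proof
        fix y assume y: "y \<in> X"
        have "\<bar>w m y - W y\<bar> < 2 * (e / 4)"
          using Wclose[OF y _ N1, of n] e by (simp add: m_def n_def)
        moreover have "\<bar>(1 - al m) * w m y\<bar> \<le> M / (real m + 2)"
        proof -
          have "\<bar>(1 - al m) * w m y\<bar> = \<bar>w m y\<bar> / (real m + 2)" by (simp add: oal abs_mult)
          also have "\<dots> \<le> M / (real m + 2)" using wb[OF y, of m] by (intro divide_right_mono) auto
          finally show ?thesis .
        qed
        moreover have "W y - al m * w m y = (W y - w m y) + (1 - al m) * w m y"
          by (simp add: algebra_simps)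
        ultimately show "\<bar>W y - al m * w m y\<bar> \<le> 3 * (e / 4)" using Msmall by linarith
      qed
      moreover have "bdX X (\<lambda>y. al m * w m y) M"
      proof -
        have "\<bar>al m * w m y\<bar> \<le> M" if "y \<in> X" for y
        proof -
          have "\<bar>al m * w m y\<bar> = al m * \<bar>w m y\<bar>" using al0[of m] by (simp add: abs_mult)
          also have "\<dots> \<le> 1 * \<bar>w m y\<bar>" using al1[of m] by (intro mult_right_mono) auto
          also have "\<dots> \<le> M" using wb[OF that] by simp
          finally show ?thesis .
        qed
        then show ?thesis by (simp add: bdX_def)
      qed
      ultimately have "\<bar>G W x - G (\<lambda>y. al m * w m y) x\<bar> \<le> 3 * (e / 4)"
        by (intro Gnexp[OF Wbd _ _ x])
      moreover have "\<bar>z m x - g x\<bar> < e / 4" using N1 x by (auto simp: m_def n_def)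
      ultimately show ?thesis using zeq[OF x, of m] by linarith
    qed
    have "\<bar>G W x - g x\<bar> \<le> 0"
    proof (rule field_le_epsilon)
      fix e :: real assume "0 < e"
      then show "\<bar>G W x - g x\<bar> \<le> 0 + e" using small by simp
    qed
    then show ?thesis by (simp add: W_def)
  qed
  then show ?thesis using Wbd Wlip by blast
qed

end


lemma bdX_zero0: "bdX X (\<lambda>_. 0) 0"
  by (simp add: bdX_def)

locale cset =
  fixes C :: "'a::euclidean_space set" and e :: 'a
  assumes C_closed: "closed C" and C_convex: "convex C" and C_cone: "cone C"
    and C_pointed: "pointed_cone C" and C_solid: "interior C \<noteq> {}"
    and e_int: "e \<in> interior (dual_cone C)"
begin

lemma C_add: "a \<in> C \<Longrightarrow> b \<in> C \<Longrightarrow> a + b \<in> C"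
  using convex_cone C_convex C_cone by blast

lemma C_scale: "a \<in> C \<Longrightarrow> 0 \<le> c \<Longrightarrow> c *\<^sub>R a \<in> C"
  using convex_cone C_convex C_cone by blast

lemma e_dual: "x \<in> C \<Longrightarrow> 0 \<le> x \<bullet> e"
  using e_int interior_subset unfolding dual_cone_def by blast

lemma e_coercive: "\<exists>\<rho>>0. \<forall>x\<in>C. \<rho> * norm x \<le> x \<bullet> e"
proof -
  obtain r where r: "r > 0" "ball e r \<subseteq> dual_cone C" using e_int by (auto simp: mem_interior)
  have "r / 2 * norm x \<le> x \<bullet> e" if x: "x \<in> C" for x
  proof (cases "x = 0")
    case True then show ?thesis by simp
  next
    case False
    define p where "p = e - (r / 2 / norm x) *\<^sub>R x"
    have "dist e p = r / 2" using False r by (simp add: p_def dist_norm)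
    then have "p \<in> dual_cone C" using r by auto
    then have "0 \<le> x \<bullet> p" using x by (auto simp: dual_cone_def)
    also have "x \<bullet> p = x \<bullet> e - (r / 2 / norm x) * (norm x)\<^sup>2"
      by (simp add: p_def inner_diff_right power2_norm_eq_inner)
    also have "\<dots> = x \<bullet> e - r / 2 * norm x" using False by (simp add: power2_eq_square)
    finally show ?thesis by simp
  qed
  then show ?thesis using r by (intro exI[of _ "r/2"]) auto
qed

lemma e_pos: "x \<in> C \<Longrightarrow> x \<noteq> 0 \<Longrightarrow> 0 < x \<bullet> e"
proof -
  assume x: "x \<in> C" "x \<noteq> 0"
  obtain \<rho> where "\<rho> > 0" "\<forall>x\<in>C. \<rho> * norm x \<le> x \<bullet> e" using e_coercive by blast
  then have "\<rho> * norm x \<le> x \<bullet> e" "0 < \<rho> * norm x" using x by auto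
  then show ?thesis by linarith
qed

lemma zero_notin_int: "0 \<notin> interior C"
proof
  assume "0 \<in> interior C"
  then obtain r where r: "r > 0" "ball 0 r \<subseteq> C" by (auto simp: mem_interior)
  obtain b :: 'a where b: "b \<in> Basis" using nonempty_Basis by blast
  define u where "u = (r / 2) *\<^sub>R b"
  have nu: "norm u = r / 2" using b r by (simp add: u_def)
  then have "u \<in> C" "- u \<in> C" using r by auto
  then have "u = 0" using C_pointed by (auto simp: pointed_cone_def)
  then show False using nu r by simp
qed

lemma int_C: "y \<in> interior C \<Longrightarrow> y \<in> C \<and> y \<noteq> 0"
  using interior_subset zero_notin_int by blast

lemma int_scale:
  assumes y: "y \<in> interior C" and t: "0 < t"
  shows "t *\<^sub>R y \<in> interior C"
proof -
  obtain r where r: "r > 0" "ball y r \<subseteq> C" using y by (auto simp: mem_interior)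
  have "ball (t *\<^sub>R y) (t * r) \<subseteq> C"
  proof
    fix z assume "z \<in> ball (t *\<^sub>R y) (t * r)"
    then have "norm (t *\<^sub>R y - z) < t * r" by (simp add: dist_norm)
    then have "norm (t *\<^sub>R (y - (1/t) *\<^sub>R z)) < t * r" using t by (simp add: algebra_simps)
    then have "t * norm (y - (1/t) *\<^sub>R z) < t * r" using t by simp
    then have "norm (y - (1/t) *\<^sub>R z) < r" using t by simp
    then have "(1/t) *\<^sub>R z \<in> C" using r by (auto simp: dist_norm)
    then have "t *\<^sub>R ((1/t) *\<^sub>R z) \<in> C" using t C_scale[of "(1/t) *\<^sub>R z" t] by linarith
    then show "z \<in> C" using t by simp
  qed
  then show ?thesis using r t by (auto simp: mem_interior intro!: exI[of _ "t * r"])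
qed

lemma ball_lin:
  assumes "ball y r \<subseteq> C" "0 < l" "norm x < l * r"
  shows "cone_le C x (l *\<^sub>R y)"
proof -
  have "norm ((1/l) *\<^sub>R x) < r" using assms by (simp add: field_simps)
  then have "y - (1/l) *\<^sub>R x \<in> C" using assms(1) by (auto simp: dist_norm)
  then have "l *\<^sub>R (y - (1/l) *\<^sub>R x) \<in> C" using assms by (intro C_scale) auto
  then show ?thesis using assms by (simp add: cone_le_def algebra_simps)
qed

definition SF where "SF x y = {l. 0 < l \<and> cone_le C x (l *\<^sub>R y)}"

lemma Funk_SF: "Funk C x y = ln (Inf (SF x y))"
  by (simp add: Funk_def SF_def)

lemma SF_ne: assumes "y \<in> interior C" shows "SF x y \<noteq> {}"
proof -
  obtain r where r: "r > 0" "ball y r \<subseteq> C" using assms by (auto simp: mem_interior)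
  define l where "l = norm x / r + 1"
  have "0 \<le> norm x / r" using r by simp
  then have l: "0 < l" by (simp add: l_def)
  have "norm x < l * r" using r by (simp add: l_def field_simps)
  then have "cone_le C x (l *\<^sub>R y)" using ball_lin[OF r(2) l] by simp
  then show ?thesis using l by (auto simp: SF_def)
qed

lemma SF_low:
  assumes "y \<in> interior C" "l \<in> SF x y"
  shows "(x \<bullet> e) / (y \<bullet> e) \<le> l"
proof -
  have ye: "0 < y \<bullet> e" using int_C[OF assms(1)] e_pos by blast
  have "l *\<^sub>R y - x \<in> C" using assms by (simp add: SF_def cone_le_def)
  then have "0 \<le> (l *\<^sub>R y - x) \<bullet> e" by (rule e_dual)
  then have "x \<bullet> e \<le> l * (y \<bullet> e)" by (simp add: inner_diff_left)
  then show ?thesis using ye by (simp add: divide_le_eq)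
qed

lemma Inf_low:
  assumes "y \<in> interior C"
  shows "(x \<bullet> e) / (y \<bullet> e) \<le> Inf (SF x y)"
  using SF_ne[OF assms] SF_low[OF assms] by (intro cInf_greatest) auto

lemma Inf_pos:
  assumes "x \<in> C" "x \<noteq> 0" "y \<in> interior C"
  shows "0 < Inf (SF x y)"
proof -
  have "0 < (x \<bullet> e) / (y \<bullet> e)" using e_pos assms int_C by auto
  then show ?thesis using Inf_low[OF assms(3), of x] by linarith
qed

lemma SF_bdd: "bdd_below (SF x y)"
  by (rule bdd_belowI[of _ 0]) (auto simp: SF_def)

lemma Funk_upper:
  assumes "x \<in> C" "x \<noteq> 0" "y \<in> interior C" "0 < l" "cone_le C x (l *\<^sub>R y)"
  shows "Funk C x y \<le> ln l"
proof -
  have "Inf (SF x y) \<le> l" using assms by (intro cInf_lower SF_bdd) (auto simp: SF_def)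
  then show ?thesis unfolding Funk_SF using Inf_pos[OF assms(1-3)] by simp
qed

lemma Funk_nonneg:
  assumes "x \<in> C" "x \<bullet> e = 1" "y \<in> interior C" "y \<bullet> e = 1"
  shows "0 \<le> Funk C x y"
  using Inf_low[OF assms(3), of x] assms unfolding Funk_SF by simp

lemma Funk_scale:
  assumes x: "x \<in> C" "x \<noteq> 0" and y: "y \<in> interior C" and s: "0 < s" and t: "0 < t"
  shows "Funk C (s *\<^sub>R x) (t *\<^sub>R y) = Funk C x y + ln s - ln t"
proof -
  have mem: "l \<in> SF (s *\<^sub>R x) (t *\<^sub>R y) \<longleftrightarrow> l * t / s \<in> SF x y" for l
  proof -
    have "(l *\<^sub>R t *\<^sub>R y - s *\<^sub>R x) = s *\<^sub>R ((l * t / s) *\<^sub>R y - x)"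
      using s by (simp add: algebra_simps)
    moreover have "z \<in> C \<longleftrightarrow> s *\<^sub>R z \<in> C" for z
    proof
      assume "s *\<^sub>R z \<in> C" then have "(1/s) *\<^sub>R (s *\<^sub>R z) \<in> C" using s C_scale[of "s *\<^sub>R z" "1/s"] by simp
      then show "z \<in> C" using s by simp
    qed (use s C_scale in auto)
    moreover have "0 < l \<longleftrightarrow> 0 < l * t / s" using s t by (simp add: zero_less_mult_iff zero_less_divide_iff)
    ultimately show ?thesis by (simp add: SF_def cone_le_def)
  qed
  define I where "I = Inf (SF x y)"
  have Ip: "0 < I" using Inf_pos[OF x y] by (simp add: I_def)
  have ty: "t *\<^sub>R y \<in> interior C" by (rule int_scale[OF y t])
  have ne': "SF (s *\<^sub>R x) (t *\<^sub>R y) \<noteq> {}" by (rule SF_ne[OF ty])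
  have "s * I / t \<le> Inf (SF (s *\<^sub>R x) (t *\<^sub>R y))"
  proof (rule cInf_greatest[OF ne'])
    fix l assume "l \<in> SF (s *\<^sub>R x) (t *\<^sub>R y)"
    then have "l * t / s \<in> SF x y" using mem by simp
    then have "I \<le> l * t / s" unfolding I_def by (intro cInf_lower SF_bdd)
    then show "s * I / t \<le> l" using s t by (simp add: field_simps)
  qed
  moreover have "Inf (SF (s *\<^sub>R x) (t *\<^sub>R y)) * t / s \<le> I"
    unfolding I_def
  proof (rule cInf_greatest[OF SF_ne[OF y]])
    fix l assume l: "l \<in> SF x y"
    have "(l * s / t) * t / s = l" using s t by simp
    then have "l * s / t \<in> SF (s *\<^sub>R x) (t *\<^sub>R y)" using mem[of "l * s / t"] l by simp
    then have "Inf (SF (s *\<^sub>R x) (t *\<^sub>R y)) \<le> l * s / t" by (intro cInf_lower SF_bdd)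
    then show "Inf (SF (s *\<^sub>R x) (t *\<^sub>R y)) * t / s \<le> l" using s t by (simp add: field_simps)
  qed
  ultimately have "Inf (SF (s *\<^sub>R x) (t *\<^sub>R y)) = s * I / t" using s t by (simp add: field_simps)
  then have "Funk C (s *\<^sub>R x) (t *\<^sub>R y) = ln (s * I / t)" by (simp add: Funk_SF)
  also have "\<dots> = ln I + ln s - ln t" using s t Ip by (simp add: ln_div ln_mult)
  finally show ?thesis by (simp add: Funk_SF I_def)
qed

lemma Funk_tri:
  assumes x: "x \<in> C" "x \<noteq> 0" and x': "x' \<in> interior C" and y: "y \<in> interior C"
  shows "Funk C x y \<le> Funk C x x' + Funk C x' y"
proof -
  define I where "I = Inf (SF x y)"
  define I1 where "I1 = Inf (SF x x')"
  define I2 where "I2 = Inf (SF x' y)"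
  have Ip: "0 < I" "0 < I1" "0 < I2" using Inf_pos x x' y int_C by (auto simp: I_def I1_def I2_def)
  have prod: "I \<le> l1 * l2" if l1: "l1 \<in> SF x x'" and l2: "l2 \<in> SF x' y" for l1 l2
  proof -
    have "l1 *\<^sub>R (l2 *\<^sub>R y - x') + (l1 *\<^sub>R x' - x) \<in> C"
      using l1 l2 by (intro C_add C_scale) (auto simp: SF_def cone_le_def)
    moreover have "l1 *\<^sub>R (l2 *\<^sub>R y - x') + (l1 *\<^sub>R x' - x) = (l1 * l2) *\<^sub>R y - x"
      by (simp add: algebra_simps)
    ultimately have "l1 * l2 \<in> SF x y" using l1 l2 by (simp add: SF_def cone_le_def)
    then show ?thesis unfolding I_def by (intro cInf_lower SF_bdd)
  qed
  have "I / l2 \<le> I1" if l2: "l2 \<in> SF x' y" for l2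
    unfolding I1_def
  proof (rule cInf_greatest[OF SF_ne[OF x']])
    fix l1 assume "l1 \<in> SF x x'"
    then have "I \<le> l1 * l2" using prod l2 by blast
    moreover have "0 < l2" using l2 by (simp add: SF_def)
    ultimately show "I / l2 \<le> l1" by (simp add: divide_le_eq)
  qed
  then have "I / I1 \<le> I2"
    unfolding I2_def[symmetric]
  proof -
    assume h: "\<And>l2. l2 \<in> SF x' y \<Longrightarrow> I / l2 \<le> I1"
    show "I / I1 \<le> I2" unfolding I2_def
    proof (rule cInf_greatest[OF SF_ne[OF y]])
      fix l2 assume l2: "l2 \<in> SF x' y"
      have "0 < l2" using l2 by (simp add: SF_def)
      then show "I / I1 \<le> l2" using h[OF l2] Ip by (simp add: field_simps)
    qed
  qed
  then have "I \<le> I1 * I2" using Ip by (simp add: field_simps)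
  then have "ln I \<le> ln (I1 * I2)" using Ip by simp
  then show ?thesis using Ip by (simp add: Funk_SF I_def I1_def I2_def ln_mult)
qed

end


locale S2 = cset C e for C :: "'a::euclidean_space set" and e :: 'a +
  fixes K :: "'a set" and A :: "'b::topological_space set" and B :: "'c::topological_space set"
    and T :: "'b \<Rightarrow> 'c \<Rightarrow> 'a \<Rightarrow> 'a" and Xh :: "'a set"
  assumes A_ne: "A \<noteq> {}" and B_ne: "B \<noteq> {}"
    and T_self: "\<And>a b x. a \<in> A \<Longrightarrow> b \<in> B \<Longrightarrow> x \<in> interior C \<Longrightarrow> T a b x \<in> interior C"
    and T_nonexp: "\<And>a b x y. a \<in> A \<Longrightarrow> b \<in> B \<Longrightarrow> x \<in> interior C \<Longrightarrow> y \<in> interior C \<Longrightarrow>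
        Funk C (T a b x) (T a b y) \<le> Funk C x y"
    and T_compact: "\<And>S. compact S \<Longrightarrow> S \<subseteq> interior C \<Longrightarrow>
        compact {T a b x | a b x. a \<in> A \<and> b \<in> B \<and> x \<in> S}"
    and K_closed: "closed K" and K_cone: "cone K" and K_sub: "K \<subseteq> C"
    and K_inv: "\<And>a b. a \<in> A \<Longrightarrow> b \<in> B \<Longrightarrow> T a b ` K \<subseteq> K"
    and X_relint: "K \<inter> Delta_set C e \<subseteq> rel_interior (Delta_set C e)"
    and X_ne: "K \<inter> Delta_set C e \<noteq> {}"
    and Xh_fin: "finite Xh" and Xh_sub: "Xh \<subseteq> K \<inter> Delta_set C e"
    and Xh_ne: "Xh \<noteq> {}"
begin

abbreviation "X \<equiv> K \<inter> Delta_set C e"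

lemma Delta_eq: "Delta_set C e = C \<inter> {x. e \<bullet> x = 1}"
  by (auto simp: Delta_set_def inner_commute)

lemma X_compact: "compact X"
proof -
  obtain \<rho> where r: "\<rho> > 0" "\<forall>x\<in>C. \<rho> * norm x \<le> x \<bullet> e" using e_coercive by blast
  have "X \<subseteq> cball 0 (1 / \<rho>)"
  proof
    fix x assume "x \<in> X"
    then have "\<rho> * norm x \<le> 1" using r by (auto simp: Delta_set_def)
    then show "x \<in> cball 0 (1 / \<rho>)" using r by (simp add: field_simps)
  qed
  then have "bounded X" using bounded_cball bounded_subset by blast
  moreover have "closed X" unfolding Delta_eq
    by (intro closed_Int K_closed C_closed closed_hyperplane)
  ultimately show ?thesis by (simp add: compact_eq_bounded_closed)
qed

lemma X_int: "X \<subseteq> interior C"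
proof -
  obtain z where z: "z \<in> interior C" using C_solid by blast
  have ze: "0 < z \<bullet> e" using int_C[OF z] e_pos by blast
  define z' where "z' = (1 / (z \<bullet> e)) *\<^sub>R z"
  have z'i: "z' \<in> interior C" unfolding z'_def using int_scale[OF z] ze by simp
  have z'e: "e \<bullet> z' = 1" using ze by (simp add: z'_def inner_commute)
  have ri: "rel_interior (Delta_set C e) = interior C \<inter> {x. e \<bullet> x = 1}"
  proof -
    have "rel_interior (C \<inter> {x. e \<bullet> x = 1}) = rel_interior C \<inter> rel_interior {x. e \<bullet> x = 1}"
    proof (rule convex_rel_interior_inter_two[OF C_convex convex_hyperplane])
      have h: "rel_interior {x. e \<bullet> x = 1} = {x. e \<bullet> x = 1}"
        by (rule rel_interior_affine[OF affine_hyperplane])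
      show "rel_interior C \<inter> rel_interior {x. e \<bullet> x = 1} \<noteq> {}"
        unfolding h rel_interior_nonempty_interior[OF C_solid] using z'i z'e by blast
    qed
    moreover have h: "rel_interior {x. e \<bullet> x = 1} = {x. e \<bullet> x = 1}"
      by (rule rel_interior_affine[OF affine_hyperplane])
    ultimately show ?thesis
      unfolding Delta_eq h rel_interior_nonempty_interior[OF C_solid] by simp
  qed
  then show ?thesis using X_relint by auto
qed

lemma X_mem: "x \<in> X \<Longrightarrow> x \<in> interior C \<and> x \<in> C \<and> x \<noteq> 0 \<and> x \<bullet> e = 1 \<and> x \<in> K"
  using X_int int_C by (auto simp: Delta_set_def)

lemma X_ball: obtains r where "r > 0" "\<And>x. x \<in> X \<Longrightarrow> ball x r \<subseteq> C"
proof -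
  obtain r where "r > 0" "(\<Union>x\<in>X. ball x r) \<subseteq> interior C"
    using compact_subset_open_imp_ball_epsilon_subset[OF X_compact open_interior X_int] by blast
  then show ?thesis using that interior_subset by blast
qed

definition rX where "rX = (SOME r. r > 0 \<and> (\<forall>x\<in>X. ball x r \<subseteq> C))"

lemma rX: "rX > 0" "\<And>x. x \<in> X \<Longrightarrow> ball x rX \<subseteq> C"
proof -
  have "\<exists>r. r > 0 \<and> (\<forall>x\<in>X. ball x r \<subseteq> C)" using X_ball by metis
  then have "rX > 0 \<and> (\<forall>x\<in>X. ball x rX \<subseteq> C)" unfolding rX_def by (rule someI_ex)
  then show "rX > 0" "\<And>x. x \<in> X \<Longrightarrow> ball x rX \<subseteq> C" by auto
qed

definition RX where "RX = (SOME R. \<forall>x\<in>X. norm x \<le> R)"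

lemma RX: "\<And>x. x \<in> X \<Longrightarrow> norm x \<le> RX"
proof -
  have "\<exists>R. \<forall>x\<in>X. norm x \<le> R" using compact_imp_bounded[OF X_compact] by (auto simp: bounded_iff)
  then have "\<forall>x\<in>X. norm x \<le> RX" unfolding RX_def by (rule someI_ex)
  then show "\<And>x. x \<in> X \<Longrightarrow> norm x \<le> RX" by blast
qed

lemma RX_nonneg: "0 \<le> RX"
  using X_ne RX norm_ge_zero order_trans by blast

definition MF where "MF = ln (RX / rX + 1)"

lemma Funk_X_bd:
  assumes x: "x \<in> X" and y: "y \<in> X"
  shows "0 \<le> Funk C x y" "Funk C x y \<le> MF"
proof -
  show "0 \<le> Funk C x y" using X_mem[OF x] X_mem[OF y] by (intro Funk_nonneg) auto
  define l where "l = RX / rX + 1"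
  have "0 \<le> RX / rX" using rX RX_nonneg by simp
  then have l: "0 < l" by (simp add: l_def)
  have "l * rX = RX + rX" using rX by (simp add: l_def field_simps)
  then have "norm x < l * rX" using RX[OF x] rX by linarith
  then have "cone_le C x (l *\<^sub>R y)" using ball_lin[OF rX(2)[OF y] l] by simp
  then show "Funk C x y \<le> MF" unfolding MF_def l_def[symmetric]
    using X_mem[OF x] X_mem[OF y] l by (intro Funk_upper) auto
qed

lemma Funk_X_cont:
  assumes x: "x \<in> X" and eps: "0 < \<epsilon>"
  shows "\<exists>d>0. \<forall>y\<in>X. norm (x - y) < d \<longrightarrow> Funk C x y < \<epsilon> \<and> Funk C y x < \<epsilon>"
proof -
  define l where "l = exp (\<epsilon> / 2)"
  have l1: "1 < l" using eps by (simp add: l_def)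
  have lnl: "ln l < \<epsilon>" using eps by (simp add: l_def)
  define d where "d = rX * (l - 1) / l"
  have d: "0 < d" using rX l1 by (simp add: d_def)
  have bx: "ball x rX \<subseteq> C" using rX(2)[OF x] .
  show ?thesis
  proof (intro exI conjI ballI impI)
    fix y assume y: "y \<in> X" and xy: "norm (x - y) < d"
    define q where "q = x + (l / (l - 1)) *\<^sub>R (y - x)"
    have "norm (x - q) = (l / (l - 1)) * norm (y - x)" using l1 by (simp add: q_def)
    also have "\<dots> < (l / (l - 1)) * d" using xy l1 by (intro mult_strict_left_mono) (auto simp: norm_minus_commute)
    also have "\<dots> = rX" using l1 by (simp add: d_def)
    finally have "q \<in> C" using bx by (auto simp: dist_norm)
    then have "(l - 1) *\<^sub>R q \<in> C" using l1 by (intro C_scale) auto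
    moreover have "(l - 1) *\<^sub>R q = l *\<^sub>R y - x"
    proof -
      have c: "(l - 1) * (l / (l - 1)) = l" using l1 by simp
      have "(l - 1) *\<^sub>R q = (l - 1) *\<^sub>R x + ((l - 1) * (l / (l - 1))) *\<^sub>R (y - x)"
        by (simp add: q_def scaleR_add_right)
      also have "\<dots> = l *\<^sub>R y - x" unfolding c by (simp add: algebra_simps)
      finally show ?thesis .
    qed
    ultimately have "cone_le C x (l *\<^sub>R y)" by (simp add: cone_le_def)
    then have "Funk C x y \<le> ln l" using X_mem[OF x] X_mem[OF y] l1 by (intro Funk_upper) auto
    then show "Funk C x y < \<epsilon>" using lnl by simp
    define q' where "q' = x + (1 / (l - 1)) *\<^sub>R (x - y)"
    have "norm (x - q') = norm (x - y) / (l - 1)" using l1 by (simp add: q'_def)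
    also have "\<dots> < d / (l - 1)" using xy l1 by (simp add: divide_strict_right_mono)
    also have "\<dots> = rX / l" using l1 by (simp add: d_def)
    also have "\<dots> < rX" using l1 rX by (simp add: divide_less_eq)
    finally have "q' \<in> C" using bx by (auto simp: dist_norm)
    then have "(l - 1) *\<^sub>R q' \<in> C" using l1 by (intro C_scale) auto
    moreover have "(l - 1) *\<^sub>R q' = l *\<^sub>R x - y" using l1 by (simp add: q'_def algebra_simps)
    ultimately have "cone_le C y (l *\<^sub>R x)" by (simp add: cone_le_def)
    then have "Funk C y x \<le> ln l" using X_mem[OF x] X_mem[OF y] l1 by (intro Funk_upper) auto
    then show "Funk C y x < \<epsilon>" using lnl by simp
  qed (rule d)
qed


definition "Y = {T a b x | a b x. a \<in> A \<and> b \<in> B \<and> x \<in> X}"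

lemma Y_compact: "compact Y"
  unfolding Y_def by (rule T_compact[OF X_compact X_int])

lemma Y_mem: "a \<in> A \<Longrightarrow> b \<in> B \<Longrightarrow> x \<in> X \<Longrightarrow> T a b x \<in> Y"
  unfolding Y_def by blast

lemma Y_int: "y \<in> Y \<Longrightarrow> y \<in> interior C \<and> y \<in> K"
  unfolding Y_def using T_self X_int K_inv by blast

lemma Y_ne: "Y \<noteq> {}"
  using A_ne B_ne X_ne Y_mem by blast

lemma Y_bounds: obtains m Mx where "0 < m" "\<And>y. y \<in> Y \<Longrightarrow> m \<le> y \<bullet> e \<and> y \<bullet> e \<le> Mx"
proof -
  have "continuous_on Y (\<lambda>y. y \<bullet> e)" by (intro continuous_intros)
  then obtain y0 where y0: "y0 \<in> Y" "\<And>y. y \<in> Y \<Longrightarrow> y0 \<bullet> e \<le> y \<bullet> e"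
    using continuous_attains_inf[OF Y_compact Y_ne] by blast
  have m: "0 < y0 \<bullet> e" using Y_int[OF y0(1)] int_C e_pos by blast
  obtain R where R: "\<And>y. y \<in> Y \<Longrightarrow> norm y \<le> R"
    using compact_imp_bounded[OF Y_compact] by (auto simp: bounded_iff)
  have "y \<bullet> e \<le> R * norm e" if "y \<in> Y" for y
  proof -
    have "y \<bullet> e \<le> norm y * norm e" by (rule norm_cauchy_schwarz)
    also have "\<dots> \<le> R * norm e" using R[OF that] by (intro mult_right_mono) auto
    finally show ?thesis .
  qed
  then show ?thesis using that[OF m] y0 by blast
qed

definition LY where "LY = (SOME L. \<forall>y\<in>Y. \<bar>ln (y \<bullet> e)\<bar> \<le> L)"

lemma LY: "y \<in> Y \<Longrightarrow> \<bar>ln (y \<bullet> e)\<bar> \<le> LY"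
proof -
  obtain m Mx where mM: "0 < m" "\<And>y. y \<in> Y \<Longrightarrow> m \<le> y \<bullet> e \<and> y \<bullet> e \<le> Mx" using Y_bounds by blast
  have "\<forall>y\<in>Y. \<bar>ln (y \<bullet> e)\<bar> \<le> \<bar>ln m\<bar> + \<bar>ln Mx\<bar>"
  proof
    fix y assume y: "y \<in> Y"
    have p: "0 < y \<bullet> e" using mM y by force
    have "ln m \<le> ln (y \<bullet> e)" using mM y p by simp
    moreover have "ln (y \<bullet> e) \<le> ln Mx"
    proof -
      have le: "y \<bullet> e \<le> Mx" using mM y by blast
      then have "0 < Mx" using p by linarith
      then show ?thesis using le p by simp
    qed
    ultimately show "\<bar>ln (y \<bullet> e)\<bar> \<le> \<bar>ln m\<bar> + \<bar>ln Mx\<bar>" by linarith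
  qed
  then have "\<exists>L. \<forall>y\<in>Y. \<bar>ln (y \<bullet> e)\<bar> \<le> L" by blast
  then have "\<forall>y\<in>Y. \<bar>ln (y \<bullet> e)\<bar> \<le> LY" unfolding LY_def by (rule someI_ex)
  then show "y \<in> Y \<Longrightarrow> \<bar>ln (y \<bullet> e)\<bar> \<le> LY" by blast
qed

lemma Y_pos: "y \<in> Y \<Longrightarrow> 0 < y \<bullet> e"
  using Y_int int_C e_pos by blast

lemma nrm_X: assumes y: "y \<in> Y" shows "(1 / (y \<bullet> e)) *\<^sub>R y \<in> X"
proof -
  have p: "0 < y \<bullet> e" by (rule Y_pos[OF y])
  have "(1 / (y \<bullet> e)) *\<^sub>R y \<in> K" using Y_int[OF y] K_cone p by (simp add: cone_def)
  moreover then have "(1 / (y \<bullet> e)) *\<^sub>R y \<in> C" using K_sub by blast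
  moreover have "((1 / (y \<bullet> e)) *\<^sub>R y) \<bullet> e = 1" using p by simp
  ultimately show ?thesis by (simp add: Delta_set_def)
qed

lemma phi_bd:
  assumes "bdX X v Bv" "x \<in> X" "a \<in> A" "b \<in> B"
  shows "\<bar>ln (T a b x \<bullet> e) + v ((1 / (T a b x \<bullet> e)) *\<^sub>R T a b x)\<bar> \<le> LY + \<bar>Bv\<bar>"
proof -
  have y: "T a b x \<in> Y" using assms by (intro Y_mem)
  have "\<bar>v ((1 / (T a b x \<bullet> e)) *\<^sub>R T a b x)\<bar> \<le> Bv" using assms(1) nrm_X[OF y] by (auto simp: bdX_def)
  then show ?thesis using LY[OF y] by linarith
qed

lemma Fop_mono:
  assumes "bdX X v B1" "bdX X w B2" "\<forall>y\<in>X. v y \<le> w y + d" "x \<in> X"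
  shows "Fop e A B T v x \<le> Fop e A B T w x + d"
  unfolding Fop_def
proof (rule infsup_mono[OF A_ne B_ne])
  fix a b assume ab: "a \<in> A" "b \<in> B"
  show "\<bar>ln (T a b x \<bullet> e) + v ((1 / (T a b x \<bullet> e)) *\<^sub>R T a b x)\<bar> \<le> LY + \<bar>B1\<bar> + \<bar>B2\<bar>"
    using phi_bd[OF assms(1) assms(4) ab] by linarith
  show "\<bar>ln (T a b x \<bullet> e) + w ((1 / (T a b x \<bullet> e)) *\<^sub>R T a b x)\<bar> \<le> LY + \<bar>B1\<bar> + \<bar>B2\<bar>"
    using phi_bd[OF assms(2) assms(4) ab] by linarith
  have y: "T a b x \<in> Y" using assms ab by (intro Y_mem)
  show "ln (T a b x \<bullet> e) + v ((1 / (T a b x \<bullet> e)) *\<^sub>R T a b x)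
      \<le> ln (T a b x \<bullet> e) + w ((1 / (T a b x \<bullet> e)) *\<^sub>R T a b x) + d"
    using assms(3) nrm_X[OF y] by auto
qed

lemma Fop0: "x \<in> X \<Longrightarrow> \<bar>Fop e A B T (\<lambda>_. 0) x\<bar> \<le> LY"
  unfolding Fop_def
  by (rule infsup_bound[OF A_ne B_ne]) (use phi_bd[OF bdX_zero0] in auto)

lemma Fop_lip:
  assumes "bdX X v Bv" "lipD X (Funk C) v"
  shows "lipD X (Funk C) (Fop e A B T v)"
  unfolding lipD_def
proof (intro ballI)
  fix x y assume x: "x \<in> X" and y: "y \<in> X"
  have "Fop e A B T v x \<le> Fop e A B T v y + Funk C x y"
    unfolding Fop_def
  proof (rule infsup_mono[OF A_ne B_ne])
    fix a b assume ab: "a \<in> A" "b \<in> B"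
    show "\<bar>ln (T a b x \<bullet> e) + v ((1 / (T a b x \<bullet> e)) *\<^sub>R T a b x)\<bar> \<le> LY + \<bar>Bv\<bar>"
      using phi_bd[OF assms(1) x ab] by linarith
    show "\<bar>ln (T a b y \<bullet> e) + v ((1 / (T a b y \<bullet> e)) *\<^sub>R T a b y)\<bar> \<le> LY + \<bar>Bv\<bar>"
      using phi_bd[OF assms(1) y ab] by linarith
    define p where "p = T a b x"
    define q where "q = T a b y"
    have p: "p \<in> Y" "q \<in> Y" unfolding p_def q_def using ab x y by (auto intro: Y_mem)
    have sp: "0 < p \<bullet> e" "0 < q \<bullet> e" using Y_pos p by auto
    have "v ((1 / (p \<bullet> e)) *\<^sub>R p) - v ((1 / (q \<bullet> e)) *\<^sub>R q)
        \<le> Funk C ((1 / (p \<bullet> e)) *\<^sub>R p) ((1 / (q \<bullet> e)) *\<^sub>R q)"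
      using assms(2) nrm_X[OF p(1)] nrm_X[OF p(2)] by (auto simp: lipD_def)
    also have "\<dots> = Funk C p q + ln (1 / (p \<bullet> e)) - ln (1 / (q \<bullet> e))"
      using Y_int[OF p(1)] Y_int[OF p(2)] int_C sp by (intro Funk_scale) auto
    also have "\<dots> = Funk C p q - ln (p \<bullet> e) + ln (q \<bullet> e)"
      using sp by (simp add: ln_div)
    also have "Funk C p q \<le> Funk C x y"
      unfolding p_def q_def using ab X_int x y by (intro T_nonexp) auto
    finally show "ln (T a b x \<bullet> e) + v ((1 / (T a b x \<bullet> e)) *\<^sub>R T a b x)
        \<le> ln (T a b y \<bullet> e) + v ((1 / (T a b y \<bullet> e)) *\<^sub>R T a b y) + Funk C x y"
      unfolding p_def q_def by linarith
  qed
  then show "Fop e A B T v x - Fop e A B T v y \<le> Funk C x y" by simp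
qed

lemma Xh_X: "Xh \<subseteq> X" using Xh_sub .

lemma Ih_le: "y \<in> Xh \<Longrightarrow> Ih C Xh v x \<le> v y + Funk C x y"
  unfolding Ih_def using Xh_fin by (intro Min_le) auto

lemma Ih_attain: "\<exists>y\<in>Xh. Ih C Xh v x = v y + Funk C x y"
proof -
  have "Ih C Xh v x \<in> (\<lambda>y. v y + Funk C x y) ` Xh"
    unfolding Ih_def using Xh_fin Xh_ne by (intro Min_in) auto
  then show ?thesis by auto
qed

lemma Ih_bd:
  assumes "bdX X v Bv" shows "bdX X (Ih C Xh v) (Bv + MF)"
  unfolding bdX_def
proof
  fix x assume x: "x \<in> X"
  obtain y where y: "y \<in> Xh" "Ih C Xh v x = v y + Funk C x y" using Ih_attain by blast
  have yX: "y \<in> X" using y Xh_X by blast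
  have "\<bar>v y\<bar> \<le> Bv" using assms yX by (auto simp: bdX_def)
  then show "\<bar>Ih C Xh v x\<bar> \<le> Bv + MF" using y Funk_X_bd[OF x yX] by linarith
qed

lemma Ih_mono:
  assumes "\<forall>y\<in>X. v y \<le> w y + d"
  shows "Ih C Xh v x \<le> Ih C Xh w x + d"
proof -
  obtain y where y: "y \<in> Xh" "Ih C Xh w x = w y + Funk C x y" using Ih_attain by blast
  have "Ih C Xh v x \<le> v y + Funk C x y" by (rule Ih_le[OF y(1)])
  also have "\<dots> \<le> w y + d + Funk C x y" using assms y Xh_X by auto
  finally show ?thesis using y by simp
qed

lemma Ih_lip: "lipD X (Funk C) (Ih C Xh v)"
  unfolding lipD_def
proof (intro ballI)
  fix x x' assume x: "x \<in> X" and x': "x' \<in> X"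
  obtain y where y: "y \<in> Xh" "Ih C Xh v x' = v y + Funk C x' y" using Ih_attain by blast
  have yX: "y \<in> X" using y Xh_X by blast
  have "Ih C Xh v x \<le> v y + Funk C x y" by (rule Ih_le[OF y(1)])
  also have "Funk C x y \<le> Funk C x x' + Funk C x' y"
    using X_mem[OF x] X_mem[OF x'] X_mem[OF yX] by (intro Funk_tri) auto
  finally show "Ih C Xh v x - Ih C Xh v x' \<le> Funk C x x'" using y by simp
qed

lemma MF_nonneg: "0 \<le> MF"
  using X_ne Funk_X_bd by (meson all_not_in_conv order_trans)

lemma absG1: "absG X (Funk C) (Fop e A B T) MF LY"
proof
  show "compact X" by (rule X_compact)
  show "X \<noteq> {}" by (rule X_ne)
qed (auto intro: Funk_X_bd Funk_X_cont Fop0 Fop_mono Fop_lip)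

lemma absG2: "absG X (Funk C) (\<lambda>v. Fop e A B T (Ih C Xh v)) MF (LY + MF)"
proof
  show "compact X" by (rule X_compact)
  show "X \<noteq> {}" by (rule X_ne)
  fix x assume x: "x \<in> X"
  have "bdX X (Ih C Xh (\<lambda>_. 0)) (0 + MF)" by (rule Ih_bd[OF bdX_zero0])
  then show "\<bar>Fop e A B T (Ih C Xh (\<lambda>_. 0)) x\<bar> \<le> LY + MF"
    using phi_bd x unfolding Fop_def using MF_nonneg
    by (intro infsup_bound[OF A_ne B_ne]) (smt (verit))
next
  fix v w B1 B2 d x
  assume h: "bdX X v B1" "bdX X w B2" "\<forall>y\<in>X. v y \<le> w y + d" "x \<in> X"
  show "Fop e A B T (Ih C Xh v) x \<le> Fop e A B T (Ih C Xh w) x + d"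
    by (rule Fop_mono[OF Ih_bd[OF h(1)] Ih_bd[OF h(2)] _ h(4)]) (use Ih_mono h(3) in blast)
next
  fix v Bv assume h: "bdX X v Bv" "lipD X (Funk C) v"
  show "lipD X (Funk C) (Fop e A B T (Ih C Xh v))"
    by (rule Fop_lip[OF Ih_bd[OF h(1)] Ih_lip])
qed (auto intro: Funk_X_bd Funk_X_cont)

lemma dl:
  assumes "bdX X v Bv" "Z \<subseteq> X" "Z \<noteq> {}"
  shows "distance_like C Z v"
proof -
  obtain x1 where x1: "x1 \<in> Z" using assms by auto
  have "- Bv - MF + Funk C x x1 \<le> v x" if "x \<in> Z" for x
    using assms Funk_X_bd[of x x1] x1 that by (force simp: bdX_def abs_le_iff)
  then show ?thesis unfolding distance_like_def using x1 by blast
qed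

theorem main:
  shows "(\<exists>lam v. v \<in> Lip1 C X \<and> distance_like C X v \<and>
            (\<forall>x\<in>X. Fop e A B T v x = lam + v x))
       \<and> (\<exists>lam v. v \<in> Lip1 C X \<and> distance_like C X v \<and>
            (\<forall>x\<in>X. Fop e A B T (Ih C Xh v) x = lam + v x))
       \<and> (\<exists>lam v. v \<in> Lip1 C Xh \<and> distance_like C Xh v \<and>
            (\<forall>x\<in>Xh. Fop e A B T (Ih C Xh v) x = lam + v x))"
proof -
  obtain lam v Bv where 1: "bdX X v Bv" "lipD X (Funk C) v" "\<forall>x\<in>X. Fop e A B T v x = lam + v x"
    using absG.eigen[OF absG1] by blast
  obtain lam2 v2 Bv2 where 2: "bdX X v2 Bv2" "lipD X (Funk C) v2"
      "\<forall>x\<in>X. Fop e A B T (Ih C Xh v2) x = lam2 + v2 x"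
    using absG.eigen[OF absG2] by blast
  have P1: "\<exists>lam v. v \<in> Lip1 C X \<and> distance_like C X v \<and> (\<forall>x\<in>X. Fop e A B T v x = lam + v x)"
    using 1 dl[OF 1(1) subset_refl X_ne] by (auto simp: Lip1_def lipD_def)
  have P2: "\<exists>lam v. v \<in> Lip1 C X \<and> distance_like C X v \<and> (\<forall>x\<in>X. Fop e A B T (Ih C Xh v) x = lam + v x)"
    using 2 dl[OF 2(1) subset_refl X_ne] by (auto simp: Lip1_def lipD_def)
  have P3: "\<exists>lam v. v \<in> Lip1 C Xh \<and> distance_like C Xh v \<and> (\<forall>x\<in>Xh. Fop e A B T (Ih C Xh v) x = lam + v x)"
  proof (intro exI conjI)
    show "v2 \<in> Lip1 C Xh" using 2(2) Xh_X by (auto simp: Lip1_def lipD_def)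
    show "distance_like C Xh v2" by (rule dl[OF 2(1) Xh_X Xh_ne])
    show "\<forall>x\<in>Xh. Fop e A B T (Ih C Xh v2) x = lam2 + v2 x" using 2(3) Xh_X by blast
  qed
  show ?thesis using P1 P2 P3 by blast
qed

end


theorem corollary2:
  fixes C K :: "'a::euclidean_space set" and e :: 'a
    and A :: "'b::topological_space set" and B :: "'c::topological_space set"
    and T :: "'b \<Rightarrow> 'c \<Rightarrow> 'a \<Rightarrow> 'a"
    and h :: real and Xh :: "'a set"
  assumes C_closed: "closed C" and C_convex: "convex C" and C_cone: "cone C"
    and C_pointed: "pointed_cone C" and C_solid: "interior C \<noteq> {}"
    and e_int: "e \<in> interior (dual_cone C)"
    and A_compact: "compact A" and A_ne: "A \<noteq> {}"
    and B_compact: "compact B" and B_ne: "B \<noteq> {}"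
    and T_self: "\<And>a b x. a \<in> A \<Longrightarrow> b \<in> B \<Longrightarrow> x \<in> interior C \<Longrightarrow> T a b x \<in> interior C"
    and T_nonexp: "\<And>a b x y. a \<in> A \<Longrightarrow> b \<in> B \<Longrightarrow> x \<in> interior C \<Longrightarrow> y \<in> interior C \<Longrightarrow>
        Funk C (T a b x) (T a b y) \<le> Funk C x y"
    and T_cont_a: "\<And>b x. b \<in> B \<Longrightarrow> x \<in> interior C \<Longrightarrow> continuous_on A (\<lambda>a. T a b x)"
    and T_cont_b: "\<And>a x. a \<in> A \<Longrightarrow> x \<in> interior C \<Longrightarrow> continuous_on B (\<lambda>b. T a b x)"
    and T_compact: "\<And>S. compact S \<Longrightarrow> S \<subseteq> interior C \<Longrightarrow>
        compact {T a b x | a b x. a \<in> A \<and> b \<in> B \<and> x \<in> S}"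
    and T_ext: "\<And>a b. a \<in> A \<Longrightarrow> b \<in> B \<Longrightarrow> continuous_on C (T a b)"
    and K_closed: "closed K" and K_cone: "cone K" and K_sub: "K \<subseteq> C"
    and K_inv: "\<And>a b. a \<in> A \<Longrightarrow> b \<in> B \<Longrightarrow> T a b ` K \<subseteq> K"
    and X_relint: "K \<inter> Delta_set C e \<subseteq> rel_interior (Delta_set C e)"
    and X_ne: "K \<inter> Delta_set C e \<noteq> {}"
    and h_pos: "0 < h"
    and Xh_fin: "finite Xh" and Xh_sub: "Xh \<subseteq> K \<inter> Delta_set C e"
    and Xh_cover: "K \<inter> Delta_set C e \<subseteq> (\<Union>y\<in>Xh. {x. Hil C x y < h})"
  shows "(\<exists>lam v. v \<in> Lip1 C (K \<inter> Delta_set C e) \<and> distance_like C (K \<inter> Delta_set C e) v \<and>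
            (\<forall>x\<in>K \<inter> Delta_set C e. Fop e A B T v x = lam + v x))
       \<and> (\<exists>lam v. v \<in> Lip1 C (K \<inter> Delta_set C e) \<and> distance_like C (K \<inter> Delta_set C e) v \<and>
            (\<forall>x\<in>K \<inter> Delta_set C e. Fop e A B T (Ih C Xh v) x = lam + v x))
       \<and> (\<exists>lam v. v \<in> Lip1 C Xh \<and> distance_like C Xh v \<and>
            (\<forall>x\<in>Xh. Fop e A B T (Ih C Xh v) x = lam + v x))"
proof -
  have Xh_ne: "Xh \<noteq> {}" using X_ne Xh_cover by blast
  interpret S2 C e K A B T Xh
    by unfold_locales (fact assms Xh_ne)+
  show ?thesis using main by simp
qed

end
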